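(* Let $f(x)$ and $g(x)$ be two distinct regular formal power series in $\mathbb{C}[[x]]$ such that $[x^1]f=[x^1]g=1$. Then $\mathrm{ord}(f-g)=\mathrm{ord}(g^{\langle-1\rangle}-f^{\langle-1\rangle})$ and $m(f-g)=m(g^{\langle-1\rangle}-f^{\langle-1\rangle})$, where $f^{\langle-1\rangle}$ and $g^{\langle-1\rangle}$ denote the compositional inverses of $f$ and $g$.
   Context: For a formal power series $f(x)=\sum_{n\ge0}a_nx^n\in\mathbb{C}[[x]]$ and $n\in\mathbb{N}_0=\{0,1,2,\dots\}$, $[x^n]f$ denotes the coefficient $a_n$. A formal power series $f$ is called regular if $[x^0]f=0$ and $[x^1]f\neq0$; every regular $f$ has a unique regular compositional inverse $f^{\langle-1\rangle}$ satisfying $f(f^{\langle-1\rangle}(x))=f^{\langle-1\rangle}(f(x))=x$. For a nonzero formal power series $h$, $\mathrm{ord}(h)$ is the least $n\in\mathbb{N}_0$ with $[x^n]h\neq0$, and $m(h)=[x^{\mathrm{ord}(h)}]h\in\mathbb{C}\setminus\{0\}$. *)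

theory Defs
  imports "HOL-Computational_Algebra.Formal_Power_Series"
begin

abbreviation fps_ord :: "complex fps \<Rightarrow> nat" where
  "fps_ord h \<equiv> subdegree h"

definition fps_lead :: "complex fps \<Rightarrow> complex" where
  "fps_lead h = fps_nth h (subdegree h)"

end

theory Submission
  imports Defs
begin

unbundle fps_syntax

lemma key:
  fixes f G d :: "'a::comm_ring_1 fps"
  assumes f0: "f $ 0 = 0" and f1: "f $ 1 = 1" and G0: "G $ 0 = 0" and d0: "d $ 0 = 0"
    and n: "n \<le> subdegree d"
  shows "((f oo (G+d)) - (f oo G)) $ n = d $ n"
proof -
  have trm: "((G+d)^i - G^i) $ n = 0" if i: "i \<ge> 2" for i
  proof -
    define S where "S = (\<Sum>m<i. G^(i - Suc m) * (G+d)^m)"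
    have eq: "(G+d)^i - G^i = d * S"
      unfolding S_def using power_diff_sumr2[of "G+d" i G] by simp
    have "S $ 0 = (\<Sum>m<i. (G^(i - Suc m) * (G+d)^m) $ 0)" unfolding S_def by (simp add: fps_sum_nth)
    also have "\<dots> = 0"
    proof (intro sum.neutral ballI)
      fix m assume "m \<in> {..<i}"
      hence "i - Suc m > 0 \<or> m > 0" using i by auto
      thus "(G^(i - Suc m) * (G+d)^m) $ 0 = 0"
        using G0 d0 by (auto simp: fps_nth_power_0 power_0_left)
    qed
    finally have S0: "S $ 0 = 0" .
    have "(d*S) $ n = (\<Sum>a=0..n. d $ a * S $ (n-a))" by (simp add: fps_mult_nth)
    also have "\<dots> = 0"
    proof (intro sum.neutral ballI)
      fix a assume a: "a \<in> {0..n}"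
      show "d $ a * S $ (n-a) = 0"
      proof (cases "a < subdegree d")
        case True thus ?thesis by (simp add: nth_less_subdegree_zero)
      next
        case False hence "n - a = 0" using a n by auto
        thus ?thesis using S0 by simp
      qed
    qed
    finally show ?thesis using eq by simp
  qed
  have "((f oo (G+d)) - (f oo G)) $ n = (\<Sum>i=0..n. f $ i * ((G+d)^i - G^i) $ n)"
    by (simp add: fps_compose_nth sum_subtractf right_diff_distrib)
  also have "\<dots> = (\<Sum>i\<in>{0..n}\<inter>{1}. f $ i * ((G+d)^i - G^i) $ n)"
  proof (rule sum.mono_neutral_right)
    show "\<forall>i\<in>{0..n} - {0..n} \<inter> {1}. f $ i * ((G + d) ^ i - G ^ i) $ n = 0"
    proof
      fix i assume "i \<in> {0..n} - {0..n} \<inter> {1}"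
      hence "i = 0 \<or> i \<ge> 2" by auto
      thus "f $ i * ((G + d) ^ i - G ^ i) $ n = 0" using trm f0 by auto
    qed
  qed auto
  also have "\<dots> = d $ n"
  proof (cases "n = 0")
    case True thus ?thesis using d0 by simp
  next
    case False hence "{0..n}\<inter>{1} = {1}" by auto
    thus ?thesis using f1 by simp
  qed
  finally show ?thesis .
qed

lemma comp_ord:
  fixes h G :: "'a::comm_ring_1 fps"
  assumes G0: "G $ 0 = 0" and G1: "G $ 1 = 1" and n: "n \<le> subdegree h"
  shows "(h oo G) $ n = h $ n"
proof -
  have "(h oo G) $ n = (\<Sum>i=0..n. h $ i * (G^i) $ n)" by (simp add: fps_compose_nth)
  also have "\<dots> = (\<Sum>i\<in>{n}. h $ i * (G^i) $ n)"
  proof (rule sum.mono_neutral_right)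
    show "\<forall>i\<in>{0..n} - {n}. h $ i * (G^i) $ n = 0"
      using n by (auto simp: nth_less_subdegree_zero)
  qed auto
  also have "\<dots> = h $ n" using startsby_zero_power_nth_same[OF G0, of n] G1 by simp
  finally show ?thesis .
qed

theorem theorem2:
  fixes f g :: "complex fps"
  assumes "f \<noteq> g"
    and "fps_nth f 0 = 0" and "fps_nth g 0 = 0"
    and "fps_nth f 1 = 1" and "fps_nth g 1 = 1"
  shows "fps_ord (f - g) = fps_ord (fps_inv g - fps_inv f)
    \<and> fps_lead (f - g) = fps_lead (fps_inv g - fps_inv f)"
proof -
  note a = assms
  define F where "F = fps_inv f"
  define G where "G = fps_inv g"
  define h where "h = f - g"
  define d where "d = F - G"
  define k where "k = subdegree h"
  have h0: "h \<noteq> 0" using a(1) h_def by simp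
  have hk: "h $ k \<noteq> 0" using h0 k_def by simp
  have F0: "F $ 0 = 0" and G0: "G $ 0 = 0" by (simp_all add: F_def G_def fps_inv_def)
  have G1: "G $ 1 = 1" using a(5) by (simp add: G_def fps_inv_def)
  have d0: "d $ 0 = 0" using F0 G0 d_def by simp
  have fF: "f oo F = fps_X" using fps_inv_right[of f] a F_def by simp
  have gG: "g oo G = fps_X" using fps_inv_right[of g] a G_def by simp
  have E: "(f oo (G + d)) - (f oo G) = - (h oo G)"
  proof -
    have GF: "G + d = F" by (simp add: d_def)
    have "h oo G = (f oo G) - fps_X" using gG by (simp add: h_def fps_compose_sub_distrib)
    thus ?thesis using GF fF by simp
  qed
  have hG: "(h oo G) $ n = h $ n" if "n \<le> k" for n using comp_ord[OF G0 G1] that k_def by simp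
  have dn: "-(h oo G) $ n = d $ n" if "n \<le> subdegree d" for n
    using key[OF a(2) a(4) G0 d0 that] E by simp
  have dnz: "d \<noteq> 0"
  proof
    assume d: "d = 0"
    have "(f oo (G + d)) - (f oo G) = 0" unfolding d by simp
    hence "h oo G = 0" using E by simp
    hence "(h oo G) $ k = 0" by simp
    thus False using hG[of k] hk by simp
  qed
  define j where "j = subdegree d"
  have dj: "d $ j \<noteq> 0" using dnz unfolding j_def by simp
  have dn': "-(h oo G) $ n = d $ n" if "n \<le> j" for n using dn that unfolding j_def by blast
  have hz: "h $ n = 0" if "n < k" for n using that unfolding k_def by (rule nth_less_subdegree_zero)
  have dz: "d $ n = 0" if "n < j" for n using that unfolding j_def by (rule nth_less_subdegree_zero)
  have jk: "j = k"
  proof (rule ccontr)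
    assume "j \<noteq> k"
    hence "j < k \<or> k < j" by auto
    thus False
    proof
      assume jk: "j < k"
      have "d $ j = - h $ j" using dn'[of j] hG[of j] jk by simp
      thus False using hz[OF jk] dj by simp
    next
      assume kj: "k < j"
      have "d $ k = - h $ k" using dn'[of k] hG[of k] kj by simp
      thus False using dz[OF kj] hk by simp
    qed
  qed
  have dk: "d $ k = - h $ k" using dn'[of k] hG[of k] jk by simp
  have eqGF: "fps_inv g - fps_inv f = - d" using d_def F_def G_def by simp
  have sd: "subdegree (- d) = k" using jk unfolding j_def by simp
  have "fps_ord (f - g) = fps_ord (fps_inv g - fps_inv f)" using sd eqGF h_def k_def by simp
  moreover have "fps_lead (f - g) = fps_lead (fps_inv g - fps_inv f)"
    unfolding fps_lead_def eqGF sd using dk h_def k_def by simp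
  ultimately show ?thesis ..
qed

end
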